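(* Assume $c_i=c>0$, $\gamma_i=\gamma>0$, $\nu_i=\nu>0$, $\rho_i=\rho\in(-1,1)$ for all $i$, and let $z^\star_{s,n},z^\star_{d,n},z^\star_{o,n}$ (the last for $n\ge2$) be the common values of the maximiser of $f$ as defined in the context, viewed as functions of $\gamma_{\rm P}\in(0,\infty)$. Then: (i) $\mathrm{sgn}(z^\star_{s,n})=-\mathrm{sgn}(\rho)$; (ii) for $n\ge2$, $z^\star_{o,n}>0$ for every $\gamma_{\rm P}>0$; and $z^\star_{d,n}>0$ for all $n\ge1$; (iii) $|z^\star_{s,n}|$ is non-increasing in $\gamma_{\rm P}$ (strictly decreasing if $\rho\ne0$) and $z^\star_{s,n}\to0$ as $\gamma_{\rm P}\to\infty$; (iv) for $n\ge2$, $\lim_{\gamma_{\rm P}\to\infty}z^\star_{o,n}=\frac{\gamma}{(n-1)A+\gamma}\in(0,1)$; (v) for all $n\ge1$, $\lim_{\gamma_{\rm P}\to\infty}z^\star_{d,n}=\frac{(n-1)A-(n-2)\gamma}{(n-1)A+\gamma}\in(0,1]$, where $A=\gamma+\frac{1}{c\nu^2}$.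
   Context: Fix an integer $n\ge1$ and parameters $\sigma>0$, $\gamma_{\rm P}>0$, and for each $i\in\{1,\dots,n\}$: $c_i>0$, $\gamma_i>0$, $\nu_i>0$, $\rho_i\in(-1,1)$. Write $\nu=(\nu_1,\dots,\nu_n)^\top$, $\rho=(\rho_1,\dots,\rho_n)^\top$. The variables are a matrix $z^Q=(z^{Q,i,j})_{i,j}\in\mathbb{R}^{n\times n}$ ($i$ row, $j$ column) and a vector $z^S=(z^{S,1},\dots,z^{S,n})^\top\in\mathbb{R}^n$. Define $f:\mathbb{R}^{n\times n}\times\mathbb{R}^n\to\mathbb{R}$ by $$f(z^Q,z^S)=-\frac1n\sum_{i=1}^n\Big(\frac{(z^{Q,i,i})^2}{2c_i}+\frac{\gamma_i}{2}\sum_{j=1}^n\nu_j^2(z^{Q,i,j})^2+\frac{\gamma_i\sigma^2}{2}(z^{S,i})^2+\frac{\gamma_i\sigma}{\sqrt n}z^{S,i}\sum_{j=1}^n\rho_j\nu_jz^{Q,i,j}-\frac{z^{Q,i,i}}{c_i}\Big)-\frac{\gamma_{\rm P}}{2n^2}\sum_{i=1}^n\Big(\Big(\nu_i-\nu_i\sum_{j=1}^nz^{Q,j,i}-\frac{\rho_i\sigma}{\sqrt n}\sum_{j=1}^nz^{S,j}\Big)^2+\frac{(1-\rho_i^2)\sigma^2}{n}\Big(\sum_{j=1}^nz^{S,j}\Big)^2\Big).$$ $f$ has a unique global maximiser $(z^{Q,\star},z^{S,\star})$. In the homogeneous case this maximiser is symmetric: $z^{S,i,\star}=z^\star_{s,n}$,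 $z^{Q,i,i,\star}=z^\star_{d,n}$ for all $i$, and $z^{Q,i,j,\star}=z^\star_{o,n}$ for all $i\ne j$ (when $n\ge2$). *)

theory Defs
  imports "HOL-Analysis.Analysis"
begin

text \<open>Indices 1..n of the paper are rendered as 0..n-1. The matrix z^Q is a function
  zQ :: nat => nat => real (row i, column j), the vector z^S is zS :: nat => real.\<close>

definition objf ::
  "nat \<Rightarrow> real \<Rightarrow> real \<Rightarrow> (nat \<Rightarrow> real) \<Rightarrow> (nat \<Rightarrow> real) \<Rightarrow> (nat \<Rightarrow> real) \<Rightarrow> (nat \<Rightarrow> real)
   \<Rightarrow> (nat \<Rightarrow> nat \<Rightarrow> real) \<Rightarrow> (nat \<Rightarrow> real) \<Rightarrow> real" where
  "objf n \<sigma> \<gamma>P c \<gamma> \<nu> \<rho> zQ zS =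
     - (1 / real n) * (\<Sum>i<n.
          (zQ i i)\<^sup>2 / (2 * c i)
        + \<gamma> i / 2 * (\<Sum>j<n. (\<nu> j)\<^sup>2 * (zQ i j)\<^sup>2)
        + \<gamma> i * \<sigma>\<^sup>2 / 2 * (zS i)\<^sup>2
        + \<gamma> i * \<sigma> / sqrt (real n) * zS i * (\<Sum>j<n. \<rho> j * \<nu> j * zQ i j)
        - zQ i i / c i)
     - \<gamma>P / (2 * (real n)\<^sup>2) * (\<Sum>i<n.
          (\<nu> i - \<nu> i * (\<Sum>j<n. zQ j i) - \<rho> i * \<sigma> / sqrt (real n) * (\<Sum>j<n. zS j))\<^sup>2
        + (1 - (\<rho> i)\<^sup>2) * \<sigma>\<^sup>2 / real n * (\<Sum>j<n. zS j)\<^sup>2)"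

text \<open>A point (zQ, zS) of R^{n x n} x R^n, represented extensionally (zero outside the index range).\<close>
definition admissible :: "nat \<Rightarrow> (nat \<Rightarrow> nat \<Rightarrow> real) \<Rightarrow> (nat \<Rightarrow> real) \<Rightarrow> bool" where
  "admissible n zQ zS \<longleftrightarrow>
     (\<forall>i j. \<not> (i < n \<and> j < n) \<longrightarrow> zQ i j = 0) \<and> (\<forall>i. n \<le> i \<longrightarrow> zS i = 0)"

definition maximiser ::
  "nat \<Rightarrow> real \<Rightarrow> real \<Rightarrow> (nat \<Rightarrow> real) \<Rightarrow> (nat \<Rightarrow> real) \<Rightarrow> (nat \<Rightarrow> real) \<Rightarrow> (nat \<Rightarrow> real)
   \<Rightarrow> (nat \<Rightarrow> nat \<Rightarrow> real) \<times> (nat \<Rightarrow> real)" where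
  "maximiser n \<sigma> \<gamma>P c \<gamma> \<nu> \<rho> =
     (THE p. admissible n (fst p) (snd p) \<and>
        (\<forall>zQ zS. admissible n zQ zS \<longrightarrow>
            objf n \<sigma> \<gamma>P c \<gamma> \<nu> \<rho> zQ zS \<le> objf n \<sigma> \<gamma>P c \<gamma> \<nu> \<rho> (fst p) (snd p)))"

text \<open>Homogeneous case: common values z*_{s,n}, z*_{d,n}, z*_{o,n} as functions of gamma_P
  (read off at indices 1, (1,1), (1,2) of the paper, i.e. 0, (0,0), (0,1) here).\<close>
definition zs_star :: "nat \<Rightarrow> real \<Rightarrow> real \<Rightarrow> real \<Rightarrow> real \<Rightarrow> real \<Rightarrow> real \<Rightarrow> real" where
  "zs_star n \<sigma> c \<gamma> \<nu> \<rho> \<gamma>P =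
     snd (maximiser n \<sigma> \<gamma>P (\<lambda>_. c) (\<lambda>_. \<gamma>) (\<lambda>_. \<nu>) (\<lambda>_. \<rho>)) 0"

definition zd_star :: "nat \<Rightarrow> real \<Rightarrow> real \<Rightarrow> real \<Rightarrow> real \<Rightarrow> real \<Rightarrow> real \<Rightarrow> real" where
  "zd_star n \<sigma> c \<gamma> \<nu> \<rho> \<gamma>P =
     fst (maximiser n \<sigma> \<gamma>P (\<lambda>_. c) (\<lambda>_. \<gamma>) (\<lambda>_. \<nu>) (\<lambda>_. \<rho>)) 0 0"

definition zo_star :: "nat \<Rightarrow> real \<Rightarrow> real \<Rightarrow> real \<Rightarrow> real \<Rightarrow> real \<Rightarrow> real \<Rightarrow> real" where
  "zo_star n \<sigma> c \<gamma> \<nu> \<rho> \<gamma>P =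
     fst (maximiser n \<sigma> \<gamma>P (\<lambda>_. c) (\<lambda>_. \<gamma>) (\<lambda>_. \<nu>) (\<lambda>_. \<rho>)) 0 1"

end

theory Submission
  imports Defs
begin

definition "lin1 n \<sigma> c \<gamma> \<nu> \<rho> (Q0::nat\<Rightarrow>nat\<Rightarrow>real) (S0::nat\<Rightarrow>real) (dQ::nat\<Rightarrow>nat\<Rightarrow>real) (dS::nat\<Rightarrow>real) i =
   Q0 i i * dQ i i / c + \<gamma> * (\<Sum>j<n. \<nu>\<^sup>2 * Q0 i j * dQ i j) + \<gamma> * \<sigma>\<^sup>2 * S0 i * dS i
   + \<gamma> * \<sigma> / sqrt (real n) * (S0 i * (\<Sum>j<n. \<rho> * \<nu> * dQ i j) + dS i * (\<Sum>j<n. \<rho> * \<nu> * Q0 i j))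
   - dQ i i / c"

definition "quad1 n \<sigma> c \<gamma> \<nu> \<rho> (dQ::nat\<Rightarrow>nat\<Rightarrow>real) (dS::nat\<Rightarrow>real) i =
   (dQ i i)\<^sup>2 / (2 * c) + \<gamma> / 2 * (\<Sum>j<n. \<nu>\<^sup>2 * (dQ i j)\<^sup>2) + \<gamma> * \<sigma>\<^sup>2 / 2 * (dS i)\<^sup>2
   + \<gamma> * \<sigma> / sqrt (real n) * dS i * (\<Sum>j<n. \<rho> * \<nu> * dQ i j)"

definition "lin2 n \<sigma> \<nu> \<rho> (Q0::nat\<Rightarrow>nat\<Rightarrow>real) (S0::nat\<Rightarrow>real) (dQ::nat\<Rightarrow>nat\<Rightarrow>real) (dS::nat\<Rightarrow>real) i =
   - 2 * (\<nu> - \<nu> * (\<Sum>j<n. Q0 j i) - \<rho> * \<sigma> / sqrt (real n) * (\<Sum>j<n. S0 j))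
       * (\<nu> * (\<Sum>j<n. dQ j i) + \<rho> * \<sigma> / sqrt (real n) * (\<Sum>j<n. dS j))
   + 2 * (1 - \<rho>\<^sup>2) * \<sigma>\<^sup>2 / real n * (\<Sum>j<n. S0 j) * (\<Sum>j<n. dS j)"

definition "quad2 n \<sigma> \<nu> \<rho> (dQ::nat\<Rightarrow>nat\<Rightarrow>real) (dS::nat\<Rightarrow>real) i =
   (\<nu> * (\<Sum>j<n. dQ j i) + \<rho> * \<sigma> / sqrt (real n) * (\<Sum>j<n. dS j))\<^sup>2
   + (1 - \<rho>\<^sup>2) * \<sigma>\<^sup>2 / real n * (\<Sum>j<n. dS j)\<^sup>2"

lemma shift1:
  fixes Q0 dQ :: "nat\<Rightarrow>nat\<Rightarrow>real" and S0 dS :: "nat \<Rightarrow> real"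
  shows "(Q0 i i + dQ i i)\<^sup>2 / (2 * c) + \<gamma> / 2 * (\<Sum>j<n. \<nu>\<^sup>2 * (Q0 i j + dQ i j)\<^sup>2)
        + \<gamma> * \<sigma>\<^sup>2 / 2 * (S0 i + dS i)\<^sup>2
        + \<gamma> * \<sigma> / sqrt (real n) * (S0 i + dS i) * (\<Sum>j<n. \<rho> * \<nu> * (Q0 i j + dQ i j))
        - (Q0 i i + dQ i i) / c
   = ((Q0 i i)\<^sup>2 / (2 * c) + \<gamma> / 2 * (\<Sum>j<n. \<nu>\<^sup>2 * (Q0 i j)\<^sup>2)
        + \<gamma> * \<sigma>\<^sup>2 / 2 * (S0 i)\<^sup>2
        + \<gamma> * \<sigma> / sqrt (real n) * S0 i * (\<Sum>j<n. \<rho> * \<nu> * Q0 i j)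
        - Q0 i i / c) + lin1 n \<sigma> c \<gamma> \<nu> \<rho> Q0 S0 dQ dS i + quad1 n \<sigma> c \<gamma> \<nu> \<rho> dQ dS i"
proof -
  have s1: "(\<Sum>j<n. \<nu>\<^sup>2 * (Q0 i j + dQ i j)\<^sup>2) = (\<Sum>j<n. \<nu>\<^sup>2 * (Q0 i j)\<^sup>2)
      + 2 * (\<Sum>j<n. \<nu>\<^sup>2 * Q0 i j * dQ i j) + (\<Sum>j<n. \<nu>\<^sup>2 * (dQ i j)\<^sup>2)"
    by (simp add: power2_sum algebra_simps sum.distrib sum_distrib_left)
  have s2: "(\<Sum>j<n. \<rho> * \<nu> * (Q0 i j + dQ i j)) = (\<Sum>j<n. \<rho> * \<nu> * Q0 i j) + (\<Sum>j<n. \<rho> * \<nu> * dQ i j)"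
    by (simp add: algebra_simps sum.distrib)
  show ?thesis unfolding s1 s2 lin1_def quad1_def
    by (simp add: power2_sum algebra_simps add_divide_distrib diff_divide_distrib)
qed

lemma shift2:
  fixes Q0 dQ :: "nat\<Rightarrow>nat\<Rightarrow>real" and S0 dS :: "nat \<Rightarrow> real"
  shows "(\<nu> - \<nu> * (\<Sum>j<n. Q0 j i + dQ j i) - \<rho> * \<sigma> / sqrt (real n) * (\<Sum>j<n. S0 j + dS j))\<^sup>2
        + (1 - \<rho>\<^sup>2) * \<sigma>\<^sup>2 / real n * (\<Sum>j<n. S0 j + dS j)\<^sup>2
   = ((\<nu> - \<nu> * (\<Sum>j<n. Q0 j i) - \<rho> * \<sigma> / sqrt (real n) * (\<Sum>j<n. S0 j))\<^sup>2
        + (1 - \<rho>\<^sup>2) * \<sigma>\<^sup>2 / real n * (\<Sum>j<n. S0 j)\<^sup>2)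
     + lin2 n \<sigma> \<nu> \<rho> Q0 S0 dQ dS i + quad2 n \<sigma> \<nu> \<rho> dQ dS i"
  unfolding sum.distrib lin2_def quad2_def
  by (simp add: power2_eq_square algebra_simps add_divide_distrib diff_divide_distrib)

lemma objf_shift:
  fixes Q0 dQ :: "nat\<Rightarrow>nat\<Rightarrow>real" and S0 dS :: "nat \<Rightarrow> real"
  shows "objf n \<sigma> \<gamma>P (\<lambda>_. c) (\<lambda>_. \<gamma>) (\<lambda>_. \<nu>) (\<lambda>_. \<rho>) (\<lambda>i j. Q0 i j + dQ i j) (\<lambda>i. S0 i + dS i)
    = objf n \<sigma> \<gamma>P (\<lambda>_. c) (\<lambda>_. \<gamma>) (\<lambda>_. \<nu>) (\<lambda>_. \<rho>) Q0 S0
      + (- (1 / real n) * (\<Sum>i<n. lin1 n \<sigma> c \<gamma> \<nu> \<rho> Q0 S0 dQ dS i)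
         - \<gamma>P / (2 * (real n)\<^sup>2) * (\<Sum>i<n. lin2 n \<sigma> \<nu> \<rho> Q0 S0 dQ dS i))
      - ((1 / real n) * (\<Sum>i<n. quad1 n \<sigma> c \<gamma> \<nu> \<rho> dQ dS i)
         + \<gamma>P / (2 * (real n)\<^sup>2) * (\<Sum>i<n. quad2 n \<sigma> \<nu> \<rho> dQ dS i))"
  unfolding objf_def
  unfolding shift1 shift2
  apply (simp only: sum.distrib)
  by (simp add: algebra_simps)

locale hom =
  fixes n :: nat and \<sigma> c \<gamma> \<nu> \<rho> :: real
  assumes hn: "n \<ge> 1" and h\<sigma>: "\<sigma> > 0" and hc: "c > 0" and h\<gamma>: "\<gamma> > 0" and h\<nu>: "\<nu> > 0"
    and h\<rho>1: "-1 < \<rho>" and h\<rho>2: "\<rho> < 1"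
begin

definition "B = 1 + c*\<gamma>*\<nu>\<^sup>2"
definition "kap = \<rho>\<^sup>2/(B*(1-\<rho>\<^sup>2))"
definition "Dn x = real n*\<gamma> + \<gamma>*kap + x*(real n - 1/B)"
definition "wv x = (real n*\<gamma> + (real n-1)*x)/Dn x"
definition "zo x = 1 - wv x"
definition "zd x = (1 + c*\<gamma>*\<nu>\<^sup>2*zo x)/B"
definition "uv x = -(\<gamma>*\<rho>*\<nu>*wv x)/(B*(1-\<rho>\<^sup>2)*(\<gamma>+x))"
definition "zs x = uv x/(\<sigma> * sqrt (real n))"
definition "Qs x i j = (if i<n \<and> j<n then (if i=j then zd x else zo x) else 0)"
definition "Ss x i = (if i<n then zs x else 0)"

lemma rho2: "\<rho>\<^sup>2 < 1" "0 < 1 - \<rho>\<^sup>2"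
  using h\<rho>1 h\<rho>2 by (auto simp: abs_square_less_1)

lemma B_gt: "B > 1" unfolding B_def using hc h\<gamma> h\<nu> by simp
lemma B_pos: "B > 0" using B_gt by simp
lemma invB: "1/B < 1" "0 < 1/B" using B_gt by auto
lemma kap_nn: "kap \<ge> 0" unfolding kap_def using B_pos rho2 by simp
lemma n_pos: "real n > 0" using hn by simp
lemma sq: "sqrt (real n) > 0" "(sqrt (real n))\<^sup>2 = real n" using n_pos by auto

lemma Dn_pos: "x \<ge> 0 \<Longrightarrow> Dn x > 0"
proof -
  assume x: "x \<ge> 0"
  have "real n - 1/B > 0" using invB hn by linarith
  then show ?thesis unfolding Dn_def using x kap_nn n_pos h\<gamma>
    by (simp add: add_pos_nonneg)
qed

lemma wv_bounds: assumes x: "x > 0" shows "0 < wv x" "wv x < 1"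
proof -
  have D: "Dn x > 0" using Dn_pos x by simp
  have N: "real n*\<gamma> + (real n-1)*x > 0" using n_pos h\<gamma> hn x
    by (simp add: add_pos_nonneg)
  show "0 < wv x" unfolding wv_def using D N by simp
  have "Dn x - (real n*\<gamma> + (real n-1)*x) = \<gamma>*kap + x*(1 - 1/B)"
    unfolding Dn_def by (simp add: algebra_simps)
  also have "\<dots> > 0" using x invB kap_nn h\<gamma> by (simp add: add_nonneg_pos)
  finally show "wv x < 1" unfolding wv_def using D by simp
qed

lemma Rform: "zd x + (real n - 1)*zo x = real n * zo x + wv x / B"
  unfolding zd_def zo_def B_def using B_pos[unfolded B_def] by (simp add: field_simps)

lemma Ueq: "x > 0 \<Longrightarrow> (1-\<rho>\<^sup>2)*(\<gamma>+x)*uv x = -\<gamma>*\<rho>*\<nu>*wv x / B"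
proof -
  assume x: "x > 0"
  have a: "1-\<rho>\<^sup>2 \<noteq> 0" "\<gamma>+x \<noteq> 0" "B \<noteq> 0" using rho2 B_pos h\<gamma> x by auto
  have k: "(1-\<rho>\<^sup>2)*(\<gamma>+x)/(B*(1-\<rho>\<^sup>2)*(\<gamma>+x)) = 1/B" using a by simp
  have "(1-\<rho>\<^sup>2)*(\<gamma>+x)*uv x = -(\<gamma>*\<rho>*\<nu>*wv x) * ((1-\<rho>\<^sup>2)*(\<gamma>+x)/(B*(1-\<rho>\<^sup>2)*(\<gamma>+x)))"
    unfolding uv_def by (simp only: divide_inverse mult_ac minus_mult_left)
  then show ?thesis unfolding k by simp
qed

lemma focA: assumes x: "x > 0"
  shows "real n*\<gamma>*\<nu>*zo x + \<gamma>*\<rho>*uv x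
     = x*(\<nu>*(1 - (zd x + (real n - 1)*zo x)) - \<rho>*uv x)"
proof -
  have D: "Dn x > 0" using Dn_pos x by simp
  have W: "wv x * Dn x = real n*\<gamma> + (real n-1)*x" unfolding wv_def using D by simp
  have U: "(\<gamma>+x)*\<rho>*uv x = -\<gamma>*\<nu>*kap*wv x"
  proof -
    have a: "1-\<rho>\<^sup>2 \<noteq> 0" "\<gamma>+x \<noteq> 0" "B \<noteq> 0" using rho2 B_pos h\<gamma> x by auto
    have "(1-\<rho>\<^sup>2)*(\<gamma>+x)*uv x = -\<gamma>*\<rho>*\<nu>*wv x / B" using Ueq x by simp
    then have "(\<gamma>+x)*uv x = -\<gamma>*\<rho>*\<nu>*wv x / (B*(1-\<rho>\<^sup>2))" using a by (simp add: field_simps)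
    then have "(\<gamma>+x)*\<rho>*uv x = \<rho>*(-\<gamma>*\<rho>*\<nu>*wv x / (B*(1-\<rho>\<^sup>2)))"
      by (metis mult.commute mult.left_commute)
    then show ?thesis unfolding kap_def by (simp add: divide_inverse power2_eq_square mult_ac)
  qed
  have "x*(\<nu>*(1 - (zd x + (real n - 1)*zo x)) - \<rho>*uv x) - (real n*\<gamma>*\<nu>*zo x + \<gamma>*\<rho>*uv x)
     = \<nu>*x*(1 - real n * zo x - wv x / B) - real n*\<gamma>*\<nu>*zo x - (\<gamma>+x)*\<rho>*uv x"
    unfolding Rform by (simp add: algebra_simps)
  also have "\<dots> = \<nu>*(x*(1 - real n * (1 - wv x) - wv x / B) - real n*\<gamma>*(1-wv x) + \<gamma>*kap*wv x)"
    unfolding U zo_def by (simp add: algebra_simps)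
  also have "\<dots> = \<nu>*(wv x * Dn x - (real n*\<gamma> + (real n-1)*x))"
    unfolding Dn_def by (simp add: algebra_simps)
  also have "\<dots> = 0" using W by simp
  finally show ?thesis by simp
qed

lemma focC: assumes x: "x > 0"
  shows "\<gamma>*(uv x + \<rho>*\<nu>*(zd x + (real n - 1)*zo x))
     = x*((\<nu>*(1 - (zd x + (real n - 1)*zo x)) - \<rho>*uv x)*\<rho> - (1-\<rho>\<^sup>2)*uv x)"
proof -
  have A: "x*(\<nu>*(1 - (zd x + (real n - 1)*zo x)) - \<rho>*uv x) * \<rho>
     = \<rho>*(real n*\<gamma>*\<nu>*zo x + \<gamma>*\<rho>*uv x)" using focA[OF x] by simp
  have U: "(1-\<rho>\<^sup>2)*(\<gamma>+x)*uv x = \<gamma>*\<rho>*\<nu>*(real n * zo x - (zd x + (real n - 1)*zo x))"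
    unfolding Ueq[OF x] Rform by (simp add: algebra_simps)
  show ?thesis using A U by (simp add: algebra_simps power2_eq_square)
qed

end

context hom begin

lemma Qs_in: "i < n \<Longrightarrow> j < n \<Longrightarrow> Qs x i j = zo x + (if j = i then zd x - zo x else 0)"
  unfolding Qs_def by auto

lemma sum_row1: assumes i: "i < n"
  shows "(\<Sum>j<n. \<nu>\<^sup>2 * Qs x i j * dQ i j) = \<nu>\<^sup>2*(zo x*(\<Sum>j<n. dQ i j) + (zd x - zo x)*dQ i i)"
proof -
  have "(\<Sum>j<n. \<nu>\<^sup>2 * Qs x i j * dQ i j) = (\<Sum>j<n. \<nu>\<^sup>2*zo x*dQ i j + (if j = i then \<nu>\<^sup>2*(zd x - zo x)*dQ i i else 0))"
    by (rule sum.cong) (auto simp: Qs_in i algebra_simps)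
  also have "\<dots> = \<nu>\<^sup>2*zo x*(\<Sum>j<n. dQ i j) + \<nu>\<^sup>2*(zd x - zo x)*dQ i i"
    using i by (simp add: sum.distrib sum_distrib_left)
  finally show ?thesis by (simp add: algebra_simps)
qed

lemma sum_row2: assumes i: "i < n"
  shows "(\<Sum>j<n. \<rho> * \<nu> * Qs x i j) = \<rho>*\<nu>*(zd x + (real n - 1)*zo x)"
proof -
  have "(\<Sum>j<n. \<rho> * \<nu> * Qs x i j) = (\<Sum>j<n. \<rho>*\<nu>*zo x + (if j = i then \<rho>*\<nu>*(zd x - zo x) else 0))"
    by (rule sum.cong) (auto simp: Qs_in i algebra_simps)
  also have "\<dots> = real n*(\<rho>*\<nu>*zo x) + \<rho>*\<nu>*(zd x - zo x)"
    using i by (simp add: sum.distrib)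
  finally show ?thesis by (simp add: algebra_simps)
qed

lemma sum_col: assumes i: "i < n"
  shows "(\<Sum>j<n. Qs x j i) = zd x + (real n - 1)*zo x"
proof -
  have "(\<Sum>j<n. Qs x j i) = (\<Sum>j<n. zo x + (if j = i then zd x - zo x else 0))"
    by (rule sum.cong) (auto simp: Qs_def i)
  also have "\<dots> = real n*zo x + (zd x - zo x)"
    using i by (simp add: sum.distrib)
  finally show ?thesis by (simp add: algebra_simps)
qed

lemma sum_S: "(\<Sum>j<n. Ss x j) = real n * zs x"
  unfolding Ss_def by simp

definition "RR x = zd x + (real n - 1)*zo x"
definition "al x = (zd x - 1)/c + \<gamma>*\<nu>\<^sup>2*(zd x - zo x)"
definition "be x = \<gamma>*\<nu>\<^sup>2*zo x + \<gamma>*\<sigma>*\<rho>*\<nu>*zs x/sqrt (real n)"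
definition "de x = \<gamma>*\<sigma>\<^sup>2*zs x + \<gamma>*\<sigma>*\<rho>*\<nu>*RR x/sqrt (real n)"
definition "ee x = \<nu> - \<nu>*RR x - \<rho>*\<sigma>/sqrt (real n)*(real n*zs x)"

lemma lin1_form: assumes i: "i < n"
  shows "lin1 n \<sigma> c \<gamma> \<nu> \<rho> (Qs x) (Ss x) dQ dS i = al x*dQ i i + be x*(\<Sum>j<n. dQ i j) + de x*dS i"
proof -
  have e: "(\<Sum>j<n. \<rho>*\<nu>*dQ i j) = \<rho>*\<nu>*(\<Sum>j<n. dQ i j)" by (simp add: sum_distrib_left)
  show ?thesis
  unfolding lin1_def sum_row1[OF i] sum_row2[OF i] al_def be_def de_def RR_def e
  using i by (simp add: Qs_def Ss_def algebra_simps add_divide_distrib diff_divide_distrib)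
qed

lemma lin2_form: assumes i: "i < n"
  shows "lin2 n \<sigma> \<nu> \<rho> (Qs x) (Ss x) dQ dS i = (-2*ee x*\<nu>)*(\<Sum>j<n. dQ j i)
     + (-2*ee x*(\<rho>*\<sigma>/sqrt (real n)) + 2*(1-\<rho>\<^sup>2)*\<sigma>\<^sup>2*zs x)*(\<Sum>j<n. dS j)"
proof -
  have e: "2 * (1 - \<rho>\<^sup>2) * \<sigma>\<^sup>2 / real n * (real n * zs x) = 2*(1-\<rho>\<^sup>2)*\<sigma>\<^sup>2*zs x"
    using n_pos by simp
  define k where "k = \<rho>*\<sigma>/sqrt (real n)"
  have k: "\<rho> * \<sigma> / sqrt (real n) = k" by (simp add: k_def)
  show ?thesis unfolding lin2_def sum_col[OF i] sum_S e
    unfolding ee_def RR_def k by (simp add: algebra_simps)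
qed

lemma LIN_form:
  "- (1 / real n) * (\<Sum>i<n. lin1 n \<sigma> c \<gamma> \<nu> \<rho> (Qs x) (Ss x) dQ dS i)
   - \<gamma>P / (2 * (real n)\<^sup>2) * (\<Sum>i<n. lin2 n \<sigma> \<nu> \<rho> (Qs x) (Ss x) dQ dS i)
   = - (1 / real n) * (al x * (\<Sum>i<n. dQ i i) + be x * (\<Sum>i<n. \<Sum>j<n. dQ i j) + de x * (\<Sum>i<n. dS i))
     - \<gamma>P / (2 * (real n)\<^sup>2) * ((-2*ee x*\<nu>)*(\<Sum>i<n. \<Sum>j<n. dQ i j)
        + real n * (-2*ee x*(\<rho>*\<sigma>/sqrt (real n)) + 2*(1-\<rho>\<^sup>2)*\<sigma>\<^sup>2*zs x)*(\<Sum>j<n. dS j))"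
proof -
  have 1: "(\<Sum>i<n. lin1 n \<sigma> c \<gamma> \<nu> \<rho> (Qs x) (Ss x) dQ dS i)
     = al x * (\<Sum>i<n. dQ i i) + be x * (\<Sum>i<n. \<Sum>j<n. dQ i j) + de x * (\<Sum>i<n. dS i)"
    by (simp add: lin1_form sum.distrib sum_distrib_left)
  have 2: "(\<Sum>i<n. lin2 n \<sigma> \<nu> \<rho> (Qs x) (Ss x) dQ dS i)
     = (-2*ee x*\<nu>)*(\<Sum>i<n. \<Sum>j<n. dQ j i)
        + real n * (-2*ee x*(\<rho>*\<sigma>/sqrt (real n)) + 2*(1-\<rho>\<^sup>2)*\<sigma>\<^sup>2*zs x)*(\<Sum>j<n. dS j)"
    by (simp add: lin2_form sum.distrib sum_distrib_left mult.assoc)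
  have 3: "(\<Sum>i<n. \<Sum>j<n. dQ j i) = (\<Sum>i<n. \<Sum>j<n. dQ i j)" by (rule sum.swap)
  show ?thesis unfolding 1 2 3 ..
qed

lemma zs_u: "\<sigma> * zs x * sqrt (real n) = uv x"
  unfolding zs_def using h\<sigma> sq by simp

lemma al0: "al x = 0"
proof -
  have z: "zd x * B = 1 + c*\<gamma>*\<nu>\<^sup>2*zo x" using B_pos by (simp add: zd_def)
  have "al x = (zd x * B - 1 - c*\<gamma>*\<nu>\<^sup>2*zo x)/c" unfolding al_def B_def using hc
    by (simp add: field_simps)
  then show ?thesis using z by simp
qed

lemma be_eq: "real n * be x = \<nu> * (real n*\<gamma>*\<nu>*zo x + \<gamma>*\<rho>*uv x)"
proof -
  have "real n * (\<gamma>*\<sigma>*\<rho>*\<nu>*zs x/sqrt (real n)) = \<gamma>*\<rho>*\<nu>*(\<sigma> * zs x * sqrt (real n))"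
    using sq by (simp add: field_simps)
  then show ?thesis unfolding be_def zs_u by (simp add: algebra_simps power2_eq_square)
qed

lemma ee_eq: "ee x = \<nu>*(1 - RR x) - \<rho>*uv x"
proof -
  have "\<rho>*\<sigma>/sqrt (real n)*(real n*zs x) = \<rho>*(\<sigma> * zs x * sqrt (real n))"
    using sq by (simp add: field_simps)
  then show ?thesis unfolding ee_def zs_u by (simp add: algebra_simps)
qed

lemma LIN0: assumes x: "x > 0"
  shows "- (1 / real n) * (\<Sum>i<n. lin1 n \<sigma> c \<gamma> \<nu> \<rho> (Qs x) (Ss x) dQ dS i)
   - x / (2 * (real n)\<^sup>2) * (\<Sum>i<n. lin2 n \<sigma> \<nu> \<rho> (Qs x) (Ss x) dQ dS i) = 0"
proof -
  have A: "real n * be x = x * ee x * \<nu>"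
  proof -
    have "real n * be x = \<nu> * (x*(\<nu>*(1-RR x) - \<rho>*uv x))" using be_eq focA[OF x] unfolding RR_def by simp
    then show ?thesis by (simp add: ee_eq mult_ac)
  qed
  have C0: "\<gamma>*(uv x + \<rho>*\<nu>*RR x) = x*(ee x*\<rho> - (1-\<rho>\<^sup>2)*uv x)"
    unfolding ee_eq using focC[OF x] unfolding RR_def by simp
  have dsq: "de x = \<sigma>/sqrt (real n) * (\<gamma>*(uv x + \<rho>*\<nu>*RR x))"
  proof -
    have "\<sigma>\<^sup>2*zs x = \<sigma>/sqrt (real n) * uv x" unfolding zs_u[symmetric] using sq
      by (simp add: field_simps power2_eq_square)
    then show ?thesis unfolding de_def by (simp add: algebra_simps)
  qed
  have zsq: "\<sigma>\<^sup>2*zs x = \<sigma>/sqrt (real n) * uv x" unfolding zs_u[symmetric] using sq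
      by (simp add: field_simps power2_eq_square)
  have C: "de x = x * (ee x*(\<rho>*\<sigma>/sqrt (real n)) - (1-\<rho>\<^sup>2)*\<sigma>\<^sup>2*zs x)"
    unfolding dsq C0 using zsq by (simp add: algebra_simps)
  define G where "G = (\<Sum>i<n. \<Sum>j<n. dQ i j)"
  define T where "T = (\<Sum>i<n. dS i)"
  have n0: "real n \<noteq> 0" using n_pos by simp
  have "- (1 / real n) * (be x * G) - x / (2 * (real n)\<^sup>2) * ((-2*ee x*\<nu>)*G) = 0"
    using A n0 by (simp add: field_simps power2_eq_square)
  moreover have "- (1 / real n) * (de x * T) - x / (2 * (real n)\<^sup>2) * (real n * (-2*ee x*(\<rho>*\<sigma>/sqrt (real n)) + 2*(1-\<rho>\<^sup>2)*\<sigma>\<^sup>2*zs x)*T) = 0"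
    unfolding C using n0 by (simp add: field_simps power2_eq_square)
  ultimately show ?thesis unfolding LIN_form al0 G_def[symmetric] T_def[symmetric]
    by (simp add: algebra_simps)
qed

end

context hom begin

lemma quad1_alt:
  "quad1 n \<sigma> c \<gamma> \<nu> \<rho> dQ dS i = (dQ i i)\<^sup>2/(2*c)
     + \<gamma>/2 * ((\<Sum>j<n. (\<nu>*dQ i j + \<rho>*\<sigma>*dS i/sqrt (real n))\<^sup>2) + (1-\<rho>\<^sup>2)*\<sigma>\<^sup>2*(dS i)\<^sup>2)"
proof -
  define b where "b = \<rho>*\<sigma>*dS i/sqrt (real n)"
  have s: "(\<Sum>j<n. (\<nu>*dQ i j + b)\<^sup>2) = (\<Sum>j<n. \<nu>\<^sup>2*(dQ i j)\<^sup>2) + 2*b*\<nu>*(\<Sum>j<n. dQ i j) + real n*b\<^sup>2"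
    by (simp add: power2_sum sum.distrib sum_distrib_left power_mult_distrib algebra_simps)
  have nb: "real n*b\<^sup>2 = \<rho>\<^sup>2*\<sigma>\<^sup>2*(dS i)\<^sup>2" using sq
    by (simp add: b_def power_divide power_mult_distrib)
  have e: "(\<Sum>j<n. \<rho>*\<nu>*dQ i j) = \<rho>*\<nu>*(\<Sum>j<n. dQ i j)" by (simp add: sum_distrib_left)
  show ?thesis unfolding quad1_def b_def[symmetric] s nb e
    by (simp add: b_def algebra_simps)
qed

lemma quad1_nn: "quad1 n \<sigma> c \<gamma> \<nu> \<rho> dQ dS i \<ge> 0"
  unfolding quad1_alt using hc h\<gamma> rho2
  by (intro add_nonneg_nonneg mult_nonneg_nonneg sum_nonneg) auto

lemma quad2_nn: "quad2 n \<sigma> \<nu> \<rho> dQ dS i \<ge> 0"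
  unfolding quad2_def using rho2 n_pos
  by (intro add_nonneg_nonneg mult_nonneg_nonneg) auto

lemma quad_zero:
  assumes x: "x > 0"
    and le: "(1 / real n) * (\<Sum>i<n. quad1 n \<sigma> c \<gamma> \<nu> \<rho> dQ dS i)
         + x / (2 * (real n)\<^sup>2) * (\<Sum>i<n. quad2 n \<sigma> \<nu> \<rho> dQ dS i) \<le> 0"
  shows "\<forall>i<n. dS i = 0" "\<forall>i<n. \<forall>j<n. dQ i j = 0"
proof -
  have q2: "x / (2 * (real n)\<^sup>2) * (\<Sum>i<n. quad2 n \<sigma> \<nu> \<rho> dQ dS i) \<ge> 0"
    using x by (intro mult_nonneg_nonneg sum_nonneg quad2_nn) auto
  have q1: "(\<Sum>i<n. quad1 n \<sigma> c \<gamma> \<nu> \<rho> dQ dS i) \<ge> 0" by (intro sum_nonneg quad1_nn)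
  have "(1 / real n) * (\<Sum>i<n. quad1 n \<sigma> c \<gamma> \<nu> \<rho> dQ dS i) \<le> 0" using le q2 by linarith
  then have "(\<Sum>i<n. quad1 n \<sigma> c \<gamma> \<nu> \<rho> dQ dS i) \<le> 0" using n_pos
    by (simp add: divide_le_0_iff)
  then have "(\<Sum>i<n. quad1 n \<sigma> c \<gamma> \<nu> \<rho> dQ dS i) = 0" using q1 by linarith
  then have z: "\<forall>i<n. quad1 n \<sigma> c \<gamma> \<nu> \<rho> dQ dS i = 0"
    using sum_nonneg_eq_0_iff[of "{..<n}" "quad1 n \<sigma> c \<gamma> \<nu> \<rho> dQ dS"] quad1_nn by auto
  have both: "dS i = 0 \<and> (\<forall>j<n. dQ i j = 0)" if i: "i < n" for i
  proof -
    define S where "S = (\<Sum>j<n. (\<nu>*dQ i j + \<rho>*\<sigma>*dS i/sqrt (real n))\<^sup>2)"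
    have S0: "S \<ge> 0" unfolding S_def by (intro sum_nonneg) auto
    have a0: "(dQ i i)\<^sup>2/(2*c) \<ge> 0" using hc by simp
    have t0: "(1-\<rho>\<^sup>2)*\<sigma>\<^sup>2*(dS i)\<^sup>2 \<ge> 0" using rho2 by simp
    have "(dQ i i)\<^sup>2/(2*c) + \<gamma>/2 * (S + (1-\<rho>\<^sup>2)*\<sigma>\<^sup>2*(dS i)\<^sup>2) = 0"
      using z i unfolding quad1_alt S_def by auto
    then have "\<gamma>/2 * (S + (1-\<rho>\<^sup>2)*\<sigma>\<^sup>2*(dS i)\<^sup>2) = 0"
      using a0 S0 t0 h\<gamma> by (smt (verit) mult_nonneg_nonneg divide_nonneg_nonneg)
    then have "S + (1-\<rho>\<^sup>2)*\<sigma>\<^sup>2*(dS i)\<^sup>2 = 0" using h\<gamma> by simp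
    then have "S = 0" and t: "(1-\<rho>\<^sup>2)*\<sigma>\<^sup>2*(dS i)\<^sup>2 = 0" using S0 t0 by linarith+
    then have dS0: "dS i = 0" using rho2 h\<sigma> by simp
    have "\<forall>j\<in>{..<n}. (\<nu>*dQ i j + \<rho>*\<sigma>*dS i/sqrt (real n))\<^sup>2 = 0"
      using \<open>S = 0\<close> unfolding S_def by (subst (asm) sum_nonneg_eq_0_iff) auto
    then have "\<forall>j<n. dQ i j = 0" using dS0 h\<nu> by auto
    with dS0 show ?thesis by simp
  qed
  show "\<forall>i<n. dS i = 0" "\<forall>i<n. \<forall>j<n. dQ i j = 0" using both by auto
qed

lemma maxim: assumes x: "x > 0"
  shows "maximiser n \<sigma> x (\<lambda>_. c) (\<lambda>_. \<gamma>) (\<lambda>_. \<nu>) (\<lambda>_. \<rho>) = (Qs x, Ss x)"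
proof -
  let ?F = "objf n \<sigma> x (\<lambda>_. c) (\<lambda>_. \<gamma>) (\<lambda>_. \<nu>) (\<lambda>_. \<rho>)"
  have key: "?F zQ zS = ?F (Qs x) (Ss x) - ((1 / real n) * (\<Sum>i<n. quad1 n \<sigma> c \<gamma> \<nu> \<rho> (\<lambda>i j. zQ i j - Qs x i j) (\<lambda>i. zS i - Ss x i) i)
         + x / (2 * (real n)\<^sup>2) * (\<Sum>i<n. quad2 n \<sigma> \<nu> \<rho> (\<lambda>i j. zQ i j - Qs x i j) (\<lambda>i. zS i - Ss x i) i))"
    for zQ zS
  proof -
    have e1: "(\<lambda>i j. Qs x i j + (zQ i j - Qs x i j)) = zQ" by simp
    have e2: "(\<lambda>i. Ss x i + (zS i - Ss x i)) = zS" by simp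
    show ?thesis
      using objf_shift[of n \<sigma> x c \<gamma> \<nu> \<rho> "Qs x" "\<lambda>i j. zQ i j - Qs x i j" "Ss x" "\<lambda>i. zS i - Ss x i"]
      unfolding e1 e2 LIN0[OF x] by simp
  qed
  have qnn: "(1 / real n) * (\<Sum>i<n. quad1 n \<sigma> c \<gamma> \<nu> \<rho> dQ dS i)
         + x / (2 * (real n)\<^sup>2) * (\<Sum>i<n. quad2 n \<sigma> \<nu> \<rho> dQ dS i) \<ge> 0" for dQ dS
    using x n_pos by (intro add_nonneg_nonneg mult_nonneg_nonneg sum_nonneg quad1_nn quad2_nn) auto
  have adm: "admissible n (Qs x) (Ss x)" unfolding admissible_def Qs_def Ss_def by auto
  show ?thesis unfolding maximiser_def
  proof (rule the_equality)
    show "admissible n (fst (Qs x, Ss x)) (snd (Qs x, Ss x)) \<and>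
      (\<forall>zQ zS. admissible n zQ zS \<longrightarrow> ?F zQ zS \<le> ?F (fst (Qs x, Ss x)) (snd (Qs x, Ss x)))"
    proof (intro conjI allI impI)
      show "admissible n (fst (Qs x, Ss x)) (snd (Qs x, Ss x))" using adm by simp
      fix zQ zS
      show "?F zQ zS \<le> ?F (fst (Qs x, Ss x)) (snd (Qs x, Ss x))"
        using key[of zQ zS] qnn[of "\<lambda>i j. zQ i j - Qs x i j" "\<lambda>i. zS i - Ss x i"] by simp
    qed
  next
    fix p assume p: "admissible n (fst p) (snd p) \<and>
      (\<forall>zQ zS. admissible n zQ zS \<longrightarrow> ?F zQ zS \<le> ?F (fst p) (snd p))"
    then have "?F (Qs x) (Ss x) \<le> ?F (fst p) (snd p)" using adm by blast
    then have le: "(1 / real n) * (\<Sum>i<n. quad1 n \<sigma> c \<gamma> \<nu> \<rho> (\<lambda>i j. fst p i j - Qs x i j) (\<lambda>i. snd p i - Ss x i) i)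
         + x / (2 * (real n)\<^sup>2) * (\<Sum>i<n. quad2 n \<sigma> \<nu> \<rho> (\<lambda>i j. fst p i j - Qs x i j) (\<lambda>i. snd p i - Ss x i) i) \<le> 0"
      using key[of "fst p" "snd p"] by linarith
    note z = quad_zero[OF x le]
    have pa: "admissible n (fst p) (snd p)" using p by blast
    have "fst p = Qs x"
    proof (intro ext)
      fix i j show "fst p i j = Qs x i j"
        using z(2) pa unfolding admissible_def Qs_def by (cases "i < n \<and> j < n") auto
    qed
    moreover have "snd p = Ss x"
    proof (intro ext)
      fix i show "snd p i = Ss x i"
        using z(1) pa unfolding admissible_def Ss_def by (cases "i < n") auto
    qed
    ultimately show "p = (Qs x, Ss x)" by (simp add: prod_eq_iff)
  qed
qed

end

context hom begin

lemma stars: assumes x: "x > 0"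
  shows "zs_star n \<sigma> c \<gamma> \<nu> \<rho> x = zs x" "zd_star n \<sigma> c \<gamma> \<nu> \<rho> x = zd x"
    "n \<ge> 2 \<Longrightarrow> zo_star n \<sigma> c \<gamma> \<nu> \<rho> x = zo x"
  using maxim[OF x] hn unfolding zs_star_def zd_star_def zo_star_def Qs_def Ss_def by auto

definition "c0 = \<gamma>*\<nu>/(B*(1-\<rho>\<^sup>2)*(\<sigma> * sqrt (real n)))"

lemma c0_pos: "c0 > 0" unfolding c0_def using h\<gamma> h\<nu> B_pos rho2 h\<sigma> sq by simp

lemma zs_form: "zs x = -\<rho> * c0 * (wv x / (\<gamma>+x))"
  unfolding zs_def uv_def c0_def by (simp add: field_simps)

lemma h_pos: "x > 0 \<Longrightarrow> wv x / (\<gamma>+x) > 0" using wv_bounds[of x] h\<gamma> by simp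

lemma h_strict: assumes a: "0 < a" and ab: "a < b"
  shows "wv b / (\<gamma>+b) < wv a / (\<gamma>+a)"
proof -
  have b: "b > 0" using a ab by simp
  have p: "wv x / (\<gamma>+x) = ((real n - 1) + \<gamma>/(\<gamma>+x)) * (1 / Dn x)" if "x > 0" for x
  proof -
    have "\<gamma>+x > 0" "Dn x > 0" using that h\<gamma> Dn_pos by auto
    then show ?thesis unfolding wv_def by (simp add: field_simps)
  qed
  have Da: "Dn a > 0" and Db: "Dn b > 0" using Dn_pos a b by auto
  have "real n - 1/B > 0" using invB hn by linarith
  then have "Dn a \<le> Dn b" unfolding Dn_def using ab by (simp add: mult_right_mono)
  then have q: "1 / Dn b \<le> 1 / Dn a" using Da by (simp add: frac_le)
  have pp: "\<gamma>/(\<gamma>+b) < \<gamma>/(\<gamma>+a)" using h\<gamma> a ab by (simp add: divide_strict_left_mono)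
  have pa: "(real n - 1) + \<gamma>/(\<gamma>+a) > 0" using hn h\<gamma> a by (simp add: add_nonneg_pos)
  have "((real n - 1) + \<gamma>/(\<gamma>+b)) * (1 / Dn b) < ((real n - 1) + \<gamma>/(\<gamma>+a)) * (1 / Dn b)"
    by (intro mult_strict_right_mono) (use pp Db in auto)
  also have "\<dots> \<le> ((real n - 1) + \<gamma>/(\<gamma>+a)) * (1 / Dn a)"
    by (intro mult_left_mono) (use q pa in auto)
  finally show ?thesis using p a b by simp
qed

definition "LL = (real n - 1)/(real n - 1/B)"

lemma inv_lim: "((\<lambda>x::real. k / x) \<longlongrightarrow> 0) at_top"
  by (rule tendsto_divide_0[OF tendsto_const]) (rule filterlim_at_top_imp_at_infinity[OF filterlim_ident])

lemma wv_lim: "(wv \<longlongrightarrow> LL) at_top"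
proof -
  have nB: "real n - 1/B \<noteq> 0" using invB hn by linarith
  have ev: "eventually (\<lambda>x. ((real n*\<gamma>)/x + (real n - 1)) / ((real n*\<gamma> + \<gamma>*kap)/x + (real n - 1/B)) = wv x) at_top"
    using eventually_gt_at_top[of 0]
  proof eventually_elim
    case (elim x)
    have e1: "(real n*\<gamma>)/x + (real n - 1) = (real n*\<gamma> + (real n-1)*x)/x" using elim by (simp add: field_simps)
    have e2: "(real n*\<gamma> + \<gamma>*kap)/x + (real n - 1/B) = Dn x / x" using elim unfolding Dn_def by (simp add: field_simps)
    show ?case unfolding e1 e2 wv_def using elim by simp
  qed
  have "((\<lambda>x. ((real n*\<gamma>)/x + (real n - 1)) / ((real n*\<gamma> + \<gamma>*kap)/x + (real n - 1/B))) \<longlongrightarrow>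
        (0 + (real n - 1)) / (0 + (real n - 1/B))) at_top"
    using nB by (intro tendsto_intros inv_lim) auto
  then have "((\<lambda>x. ((real n*\<gamma>)/x + (real n - 1)) / ((real n*\<gamma> + \<gamma>*kap)/x + (real n - 1/B))) \<longlongrightarrow> LL) at_top"
    unfolding LL_def by simp
  then show ?thesis using Lim_transform_eventually[OF _ ev] by simp
qed

lemma inv_gx: "((\<lambda>x. 1/(\<gamma>+x)) \<longlongrightarrow> 0) at_top"
  by (rule tendsto_divide_0[OF tendsto_const])
     (rule filterlim_at_top_imp_at_infinity[OF filterlim_tendsto_add_at_top[OF tendsto_const filterlim_ident]])

lemma zs_lim: "(zs \<longlongrightarrow> 0) at_top"
proof -
  have "((\<lambda>x. -\<rho> * c0 * (wv x * (1/(\<gamma>+x)))) \<longlongrightarrow> -\<rho> * c0 * (LL * 0)) at_top"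
    by (intro tendsto_intros wv_lim inv_gx)
  then show ?thesis unfolding zs_form by simp
qed

lemma zo_lim: "(zo \<longlongrightarrow> 1 - LL) at_top"
  unfolding zo_def[abs_def] by (intro tendsto_intros wv_lim)

lemma zd_lim: "(zd \<longlongrightarrow> (1 + c*\<gamma>*\<nu>\<^sup>2*(1-LL))/B) at_top"
  unfolding zd_def[abs_def] using B_pos by (intro tendsto_intros zo_lim) auto

end

theorem mainTheorem3:
  fixes n :: nat and \<sigma> c \<gamma> \<nu> \<rho> :: real
  assumes hn: "n \<ge> 1" and h\<sigma>: "\<sigma> > 0" and hc: "c > 0" and h\<gamma>: "\<gamma> > 0" and h\<nu>: "\<nu> > 0"
    and h\<rho>: "-1 < \<rho>" "\<rho> < 1"
  defines "A \<equiv> \<gamma> + 1 / (c * \<nu>\<^sup>2)"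
  shows
    \<comment> \<open>(i)\<close>
    "(\<forall>\<gamma>P>0. sgn (zs_star n \<sigma> c \<gamma> \<nu> \<rho> \<gamma>P) = - sgn \<rho>)
     \<comment> \<open>(ii)\<close>
     \<and> (n \<ge> 2 \<longrightarrow> (\<forall>\<gamma>P>0. zo_star n \<sigma> c \<gamma> \<nu> \<rho> \<gamma>P > 0))
     \<and> (\<forall>\<gamma>P>0. zd_star n \<sigma> c \<gamma> \<nu> \<rho> \<gamma>P > 0)
     \<comment> \<open>(iii)\<close>
     \<and> (\<forall>a b. 0 < a \<longrightarrow> a \<le> b \<longrightarrow>
          \<bar>zs_star n \<sigma> c \<gamma> \<nu> \<rho> b\<bar> \<le> \<bar>zs_star n \<sigma> c \<gamma> \<nu> \<rho> a\<bar>)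
     \<and> (\<rho> \<noteq> 0 \<longrightarrow> (\<forall>a b. 0 < a \<longrightarrow> a < b \<longrightarrow>
          \<bar>zs_star n \<sigma> c \<gamma> \<nu> \<rho> b\<bar> < \<bar>zs_star n \<sigma> c \<gamma> \<nu> \<rho> a\<bar>))
     \<and> ((zs_star n \<sigma> c \<gamma> \<nu> \<rho> \<longlongrightarrow> 0) at_top)
     \<comment> \<open>(iv)\<close>
     \<and> (n \<ge> 2 \<longrightarrow>
          ((zo_star n \<sigma> c \<gamma> \<nu> \<rho> \<longlongrightarrow> \<gamma> / ((real n - 1) * A + \<gamma>)) at_top)
          \<and> 0 < \<gamma> / ((real n - 1) * A + \<gamma>) \<and> \<gamma> / ((real n - 1) * A + \<gamma>) < 1)
     \<comment> \<open>(v)\<close>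
     \<and> ((zd_star n \<sigma> c \<gamma> \<nu> \<rho> \<longlongrightarrow>
            ((real n - 1) * A - (real n - 2) * \<gamma>) / ((real n - 1) * A + \<gamma>)) at_top)
     \<and> 0 < ((real n - 1) * A - (real n - 2) * \<gamma>) / ((real n - 1) * A + \<gamma>)
     \<and> ((real n - 1) * A - (real n - 2) * \<gamma>) / ((real n - 1) * A + \<gamma>) \<le> 1"
proof -
  interpret H: hom n \<sigma> c \<gamma> \<nu> \<rho> using assms by unfold_locales auto
  have absz: "\<bar>zs_star n \<sigma> c \<gamma> \<nu> \<rho> x\<bar> = \<bar>\<rho>\<bar> * (H.c0 * (H.wv x / (\<gamma>+x)))" if "x > 0" for x
  proof -
    have "\<bar>H.wv x\<bar> = H.wv x" "\<bar>\<gamma>+x\<bar> = \<gamma>+x" using H.wv_bounds[OF that] h\<gamma> that by auto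
    then show ?thesis using H.stars(1)[OF that] H.zs_form[of x] H.c0_pos
      by (simp add: abs_mult)
  qed
  have P1: "\<forall>\<gamma>P>0. sgn (zs_star n \<sigma> c \<gamma> \<nu> \<rho> \<gamma>P) = - sgn \<rho>"
  proof (intro allI impI)
    fix x :: real assume x: "x > 0"
    define p where "p = H.c0 * (H.wv x / (\<gamma>+x))"
    have pos: "p > 0" unfolding p_def using H.c0_pos H.h_pos[OF x] by (rule mult_pos_pos)
    have "zs_star n \<sigma> c \<gamma> \<nu> \<rho> x = -\<rho> * p"
      using H.stars(1)[OF x] H.zs_form[of x] unfolding p_def by simp
    then show "sgn (zs_star n \<sigma> c \<gamma> \<nu> \<rho> x) = - sgn \<rho>" using pos by (simp add: sgn_mult)
  qed
  have P2: "n \<ge> 2 \<longrightarrow> (\<forall>\<gamma>P>0. zo_star n \<sigma> c \<gamma> \<nu> \<rho> \<gamma>P > 0)"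
    using H.stars(3) H.wv_bounds unfolding H.zo_def by auto
  have zo_pos: "H.zo x > 0" if "x > 0" for x using H.wv_bounds[OF that] unfolding H.zo_def by simp
  have P3: "\<forall>\<gamma>P>0. zd_star n \<sigma> c \<gamma> \<nu> \<rho> \<gamma>P > 0"
  proof (intro allI impI)
    fix x :: real assume x: "x > 0"
    have "1 + c*\<gamma>*\<nu>\<^sup>2*H.zo x > 0" using zo_pos[OF x] hc h\<gamma> h\<nu> by (simp add: add_pos_pos)
    then show "zd_star n \<sigma> c \<gamma> \<nu> \<rho> x > 0" using H.stars(2)[OF x] H.B_pos unfolding H.zd_def by simp
  qed
  define hh where "hh = (\<lambda>x. H.c0 * (H.wv x / (\<gamma>+x)))"
  have hhs: "hh b < hh a" if "0 < a" "a < b" for a b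
    unfolding hh_def by (rule mult_strict_left_mono[OF H.h_strict[OF that] H.c0_pos])
  have absz': "\<bar>zs_star n \<sigma> c \<gamma> \<nu> \<rho> x\<bar> = \<bar>\<rho>\<bar> * hh x" if "x > 0" for x
    unfolding hh_def using absz[OF that] .
  have P4: "\<forall>a b. 0 < a \<longrightarrow> a \<le> b \<longrightarrow>
          \<bar>zs_star n \<sigma> c \<gamma> \<nu> \<rho> b\<bar> \<le> \<bar>zs_star n \<sigma> c \<gamma> \<nu> \<rho> a\<bar>"
  proof (intro allI impI)
    fix a b :: real assume a: "0 < a" and ab: "a \<le> b"
    show "\<bar>zs_star n \<sigma> c \<gamma> \<nu> \<rho> b\<bar> \<le> \<bar>zs_star n \<sigma> c \<gamma> \<nu> \<rho> a\<bar>"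
    proof (cases "a = b")
      case False
      then have ab': "a < b" using ab by simp
      have "\<bar>\<rho>\<bar> * hh b \<le> \<bar>\<rho>\<bar> * hh a"
        by (rule mult_left_mono) (use hhs[OF a ab'] in auto)
      then show ?thesis using absz'[OF a] absz'[of b] a ab' by simp
    qed simp
  qed
  have P5: "\<rho> \<noteq> 0 \<longrightarrow> (\<forall>a b. 0 < a \<longrightarrow> a < b \<longrightarrow>
          \<bar>zs_star n \<sigma> c \<gamma> \<nu> \<rho> b\<bar> < \<bar>zs_star n \<sigma> c \<gamma> \<nu> \<rho> a\<bar>)"
  proof (intro impI allI)
    fix a b :: real assume r: "\<rho> \<noteq> 0" and a: "0 < a" and ab: "a < b"
    have "\<bar>\<rho>\<bar> * hh b < \<bar>\<rho>\<bar> * hh a"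
      by (rule mult_strict_left_mono) (use hhs[OF a ab] r in auto)
    then show "\<bar>zs_star n \<sigma> c \<gamma> \<nu> \<rho> b\<bar> < \<bar>zs_star n \<sigma> c \<gamma> \<nu> \<rho> a\<bar>"
      using absz'[OF a] absz'[of b] a ab by simp
  qed
  have evs: "eventually (\<lambda>x. H.zs x = zs_star n \<sigma> c \<gamma> \<nu> \<rho> x) at_top"
    using eventually_gt_at_top[of 0] by eventually_elim (simp add: H.stars)
  have P6: "(zs_star n \<sigma> c \<gamma> \<nu> \<rho> \<longlongrightarrow> 0) at_top"
    using Lim_transform_eventually[OF H.zs_lim evs] by simp
  define K where "K = c*\<nu>\<^sup>2"
  have K: "K > 0" unfolding K_def using hc h\<nu> by simp
  have Bc: "H.B = 1 + \<gamma>*K" unfolding H.B_def K_def by (simp add: mult_ac)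
  have AK: "A = \<gamma> + 1/K" unfolding A_def K_def ..
  have Aeq: "A = H.B / K" unfolding AK Bc using K by (simp add: field_simps)
  have nB: "real n * H.B - 1 > 0" using H.B_gt hn
    by (smt (verit, best) mult_less_cancel_right2 of_nat_1 of_nat_mono)
  have den: "(real n - 1) * A + \<gamma> = (real n * H.B - 1) / K"
    unfolding Aeq using K unfolding Bc by (simp add: field_simps)
  have LLe: "1 - H.LL = (H.B - 1)/(real n * H.B - 1)"
    unfolding H.LL_def using H.B_pos nB by (simp add: field_simps)
  have lim4: "1 - H.LL = \<gamma> / ((real n - 1) * A + \<gamma>)"
    unfolding den LLe using K nB unfolding Bc by (simp add: field_simps)
  have lim5: "(1 + c*\<gamma>*\<nu>\<^sup>2*(1-H.LL))/H.B = ((real n - 1) * A - (real n - 2) * \<gamma>) / ((real n - 1) * A + \<gamma>)"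
  proof -
    have cg: "c*\<gamma>*\<nu>\<^sup>2 = \<gamma>*K" unfolding K_def by (simp add: mult_ac)
    have num: "(real n - 1) * A - (real n - 2) * \<gamma> = (H.B + real n - 2) / K"
      unfolding Aeq using K unfolding Bc by (simp add: field_simps)
    have gK: "\<gamma>*K = H.B - 1" unfolding Bc by simp
    define m where "m = real n * H.B - 1"
    have m: "m > 0" unfolding m_def using nB .
    have "1 + (H.B - 1)*((H.B - 1)/m) = (m + (H.B-1)*(H.B-1))/m" using m by (simp add: field_simps)
    also have "m + (H.B-1)*(H.B-1) = H.B*(H.B + real n - 2)" unfolding m_def by (simp add: algebra_simps)
    finally have e: "1 + (H.B - 1)*((H.B - 1)/m) = H.B*(H.B + real n - 2)/m" .
    have "(1 + \<gamma>*K*(1-H.LL))/H.B = (H.B + real n - 2) / (real n * H.B - 1)"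
      unfolding LLe gK m_def[symmetric] e using H.B_pos by simp
    then show ?thesis unfolding num den cg using K by simp
  qed
  have P7: "n \<ge> 2 \<longrightarrow>
          ((zo_star n \<sigma> c \<gamma> \<nu> \<rho> \<longlongrightarrow> \<gamma> / ((real n - 1) * A + \<gamma>)) at_top)
          \<and> 0 < \<gamma> / ((real n - 1) * A + \<gamma>) \<and> \<gamma> / ((real n - 1) * A + \<gamma>) < 1"
  proof
    assume n2: "n \<ge> 2"
    have evo: "eventually (\<lambda>x. H.zo x = zo_star n \<sigma> c \<gamma> \<nu> \<rho> x) at_top"
      using eventually_gt_at_top[of 0] by eventually_elim (simp add: H.stars n2)
    have Ap: "A > 0" unfolding AK using h\<gamma> K by (intro add_pos_pos) auto
    have "(real n - 1) * A > 0" using n2 Ap by simp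
    then show "((zo_star n \<sigma> c \<gamma> \<nu> \<rho> \<longlongrightarrow> \<gamma> / ((real n - 1) * A + \<gamma>)) at_top)
          \<and> 0 < \<gamma> / ((real n - 1) * A + \<gamma>) \<and> \<gamma> / ((real n - 1) * A + \<gamma>) < 1"
      using Lim_transform_eventually[OF H.zo_lim evo] lim4 h\<gamma> by simp
  qed
  have evd: "eventually (\<lambda>x. H.zd x = zd_star n \<sigma> c \<gamma> \<nu> \<rho> x) at_top"
    using eventually_gt_at_top[of 0] by eventually_elim (simp add: H.stars)
  have P8: "(zd_star n \<sigma> c \<gamma> \<nu> \<rho> \<longlongrightarrow>
            ((real n - 1) * A - (real n - 2) * \<gamma>) / ((real n - 1) * A + \<gamma>)) at_top"
    using Lim_transform_eventually[OF H.zd_lim evd] lim5 by simp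
  have dpos: "(real n - 1) * A + \<gamma> > 0" unfolding den using nB K by simp
  have P9: "0 < ((real n - 1) * A - (real n - 2) * \<gamma>)"
  proof -
    have "(real n - 1) * A - (real n - 2) * \<gamma> = (real n - 1) / K + \<gamma>"
      unfolding AK by (simp add: algebra_simps add_divide_distrib[symmetric])
    also have "\<dots> > 0" using hn K h\<gamma> by (simp add: add_nonneg_pos)
    finally show ?thesis .
  qed
  have P10: "(real n - 1) * A - (real n - 2) * \<gamma> \<le> (real n - 1) * A + \<gamma>"
    using hn h\<gamma> by (simp add: algebra_simps)
  show ?thesis using P1 P2 P3 P4 P5 P6 P7 P8 P9 P10 dpos by simp
qed


end
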